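(* Let $\phi:\mathbb{N}\to\mathbb{N}$ be any function. For any instance oracle $f$ with $\max\{|f(G,v)|: G \text{ an } n\text{-node graph}, v\in G\}=o(n\phi(n))$ and any deterministic exploration algorithm $A$, there exist a constant $c>0$ and infinitely many $n$ such that for each of them there are an $n$-node graph $G$ and a starting node $v$ for which the agent executing $A$ with input $f(G,v)$ from $v$ does not explore $G$ within fewer than $c\, n^2/2^{\phi(n)}$ edge traversals. That is, exploration takes time $\Omega(n^2/2^{\phi(n)})$ on some $n$-node graph, for arbitrarily large $n$.
   Context: Model: a graph is a simple connected undirected graph with $n$ nodes. Nodes are unlabeled; at each node of degree $d$ the incident edges carry distinct port numbers $0,\dots,d-1$, arbitrarily assigned. A mobile agent starts at some node. At each step, located at a node $u$ whose degree it knows, it chooses a port at $u$ and traverses the corresponding edge to a neighbor $w$; upon arrival it learns the port number of this edge at $w$ and the degree of $w$. The agent must visit all nodes and stop; the time of exploration is the number of edge traversals. A deterministic exploration algorithm receives as input a binary string (advice); its size is its length. An instance oracle is a function assigning a binary string $f(G,v)$ to each pair $(G,v)$ where $G$ is a port-numbered graph and $v$ is the starting node of the agent in $G$. *)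

theory Defs
  imports Main "HOL-Library.Landau_Symbols"
begin

text \<open>Nodes are 0..<n (the labels are invisible to the agent).
  deg u is the degree of u; port u p = (w, q) means that port p at u leads to node w,
  where this edge has port number q at w.\<close>
record pgraph =
  deg  :: "nat \<Rightarrow> nat"
  port :: "nat \<Rightarrow> nat \<Rightarrow> nat \<times> nat"

definition pg_edges :: "nat \<Rightarrow> pgraph \<Rightarrow> (nat \<times> nat) set" where
  "pg_edges n G = {(u, w). u < n \<and> (\<exists>p < deg G u. fst (port G u p) = w)}"

text \<open>G is a simple connected undirected port-numbered graph with node set {0..<n};
  values outside the graph are normalised so that there are finitely many n-node graphs.\<close>
definition pgraph_wf :: "nat \<Rightarrow> pgraph \<Rightarrow> bool" where
  "pgraph_wf n G \<longleftrightarrow>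
     (\<forall>u < n. \<forall>p < deg G u.
        fst (port G u p) < n \<and> fst (port G u p) \<noteq> u \<and>
        snd (port G u p) < deg G (fst (port G u p)) \<and>
        port G (fst (port G u p)) (snd (port G u p)) = (u, p)) \<and>
     (\<forall>u < n. inj_on (\<lambda>p. fst (port G u p)) {..<deg G u}) \<and>
     (\<forall>u < n. \<forall>w < n. (u, w) \<in> (pg_edges n G)\<^sup>*) \<and>
     (\<forall>u. n \<le> u \<longrightarrow> deg G u = 0) \<and>
     (\<forall>u p. (n \<le> u \<or> deg G u \<le> p) \<longrightarrow> port G u p = (0, 0))"

text \<open>A deterministic exploration algorithm: given the advice, the degree of the start node,
  and the history of observations (port taken, port at arrival, degree of arrival node),
  it either stops (None) or chooses a port (Some p).\<close>
type_synonym algorithm = "bool list \<Rightarrow> nat \<Rightarrow> (nat \<times> nat \<times> nat) list \<Rightarrow> nat option"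

fun run :: "algorithm \<Rightarrow> bool list \<Rightarrow> pgraph \<Rightarrow> nat \<Rightarrow> nat \<Rightarrow>
             (nat \<times> (nat \<times> nat \<times> nat) list) option" where
  "run A x G v 0 = Some (v, [])"
| "run A x G v (Suc k) =
     (case run A x G v k of
        None \<Rightarrow> None
      | Some (u, h) \<Rightarrow>
          (case A x (deg G v) h of
             None \<Rightarrow> None
           | Some p \<Rightarrow>
               (if p < deg G u then
                  Some (fst (port G u p),
                        h @ [(p, snd (port G u p), deg G (fst (port G u p)))])
                else None)))"

definition explores_in :: "algorithm \<Rightarrow> bool list \<Rightarrow> nat \<Rightarrow> pgraph \<Rightarrow> nat \<Rightarrow> nat \<Rightarrow> bool" where
  "explores_in A x n G v k \<longleftrightarrow>
     (\<exists>u h. run A x G v k = Some (u, h) \<and> A x (deg G v) h = None) \<and>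
     {..<n} \<subseteq> {fst (the (run A x G v i)) | i. i \<le> k}"

definition max_advice :: "(pgraph \<Rightarrow> nat \<Rightarrow> bool list) \<Rightarrow> nat \<Rightarrow> nat" where
  "max_advice f n = Max {length (f G v) | G v. pgraph_wf n G \<and> v < n}"

end

theory Submission imports Defs "HOL-Library.Infinite_Set" begin

definition rk :: "nat set \<Rightarrow> nat \<Rightarrow> nat" where "rk S e = card {e'\<in>S. e' < e}"
definition ur :: "nat set \<Rightarrow> nat \<Rightarrow> nat" where "ur S j = the_inv_into S (rk S) j"

lemma rk_lt: "finite S \<Longrightarrow> e \<in> S \<Longrightarrow> rk S e < card S"
  unfolding rk_def by (rule psubset_card_mono) auto

lemma rk_mono: "finite S \<Longrightarrow> e1 \<in> S \<Longrightarrow> e1 < e2 \<Longrightarrow> rk S e1 < rk S e2"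
  unfolding rk_def by (rule psubset_card_mono) auto

lemma rk_inj: "finite S \<Longrightarrow> inj_on (rk S) S"
  by (metis inj_onI linorder_neqE_nat rk_mono less_irrefl)

lemma rk_image: "finite S \<Longrightarrow> rk S ` S = {..<card S}"
proof -
  assume f: "finite S"
  have "rk S ` S \<subseteq> {..<card S}" using rk_lt[OF f] by auto
  moreover have "card (rk S ` S) = card {..<card S}" using card_image[OF rk_inj[OF f]] by simp
  ultimately show ?thesis by (simp add: card_subset_eq)
qed

lemma ur_in: "finite S \<Longrightarrow> j < card S \<Longrightarrow> ur S j \<in> S"
  unfolding ur_def by (rule the_inv_into_into[OF rk_inj]) (auto simp: rk_image)

lemma rk_ur: "finite S \<Longrightarrow> j < card S \<Longrightarrow> rk S (ur S j) = j"
  unfolding ur_def by (rule f_the_inv_into_f[OF rk_inj]) (auto simp: rk_image)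

lemma ur_rk: "finite S \<Longrightarrow> e \<in> S \<Longrightarrow> ur S (rk S e) = e"
  unfolding ur_def by (rule the_inv_into_f_f[OF rk_inj])

definition code :: "nat \<Rightarrow> nat \<Rightarrow> nat \<Rightarrow> nat" where "code a u p = (if u < a then u*a+p else p*a+(u-a))"
definition bnext :: "nat \<Rightarrow> nat \<Rightarrow> nat \<Rightarrow> nat" where "bnext a u p = (if u < a then a+p else p)"
definition barr :: "nat \<Rightarrow> nat \<Rightarrow> nat" where "barr a u = (if u < a then u else u - a)"
definition marr :: "nat \<Rightarrow> nat \<Rightarrow> nat" where "marr a u = (if u < a then 0 else 1)"

definition GS :: "nat \<Rightarrow> nat set \<Rightarrow> pgraph" where
 "GS a S = \<lparr>deg = (\<lambda>u. if u < 2*a then a else if u < 2*a + card S then 2 else 0),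
   port = (\<lambda>u p. if u < 2*a \<and> p < a then
        (if code a u p \<in> S then (2*a + rk S (code a u p), marr a u) else (bnext a u p, barr a u))
     else if 2*a \<le> u \<and> u < 2*a + card S \<and> p < 2 then
        (if p = 0 then (ur S (u-2*a) div a, ur S (u-2*a) mod a)
         else (a + ur S (u-2*a) mod a, ur S (u-2*a) div a))
     else (0,0))\<rparr>"

lemma lt_sq: "(x::nat) < a \<Longrightarrow> y < a \<Longrightarrow> x*a+y < a*a"
proof -
  assume "x < a" "y < a"
  then have "(x+1)*a \<le> a*a" by (intro mult_right_mono) auto
  then show ?thesis using \<open>y < a\<close> by simp
qed

lemma code_lt: "u < 2*a \<Longrightarrow> p < a \<Longrightarrow> code a u p < a*a"
proof (cases "u < a")
  case True
  assume "p < a" then show ?thesis using True lt_sq[of u a p] by (simp add: code_def)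
next
  case False
  assume "u < 2*a" "p < a"
  then obtain w where w: "u = a + w" "w < a" using False by (metis add_diff_inverse_nat mult_2 nat_add_left_cancel_less)
  then show ?thesis using \<open>p<a\<close> lt_sq[of p a w] by (simp add: code_def)
qed

lemma dm1: "(y::nat) < a \<Longrightarrow> (x*a+y) div a = x" by simp
lemma dm2: "(y::nat) < a \<Longrightarrow> (x*a+y) mod a = y" by simp

lemma code_dm0: "0 < a \<Longrightarrow> e < a*a \<Longrightarrow> code a (e div a) (e mod a) = e"
  unfolding code_def by (simp add: div_less_iff_less_mult mult.commute)
lemma code_dm1: "0 < a \<Longrightarrow> e < a*a \<Longrightarrow> code a (a + e mod a) (e div a) = e"
  unfolding code_def by (simp add: mult.commute)

lemma GS_deg: "deg (GS a S) u = (if u < 2*a then a else if u < 2*a + card S then 2 else 0)"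
  by (simp add: GS_def)

lemma GS_port_base: "u < 2*a \<Longrightarrow> p < a \<Longrightarrow> port (GS a S) u p =
   (if code a u p \<in> S then (2*a + rk S (code a u p), marr a u) else (bnext a u p, barr a u))"
  by (simp add: GS_def)

lemma GS_port_mid: "j < card S \<Longrightarrow> p < 2 \<Longrightarrow> port (GS a S) (2*a+j) p =
   (if p = 0 then (ur S j div a, ur S j mod a) else (a + ur S j mod a, ur S j div a))"
  by (simp add: GS_def)

lemma GS_port_out: "\<not> (u < 2*a \<and> p < a) \<Longrightarrow> \<not> (2*a \<le> u \<and> u < 2*a + card S \<and> p < 2) \<Longrightarrow> port (GS a S) u p = (0,0)"
  unfolding GS_def by auto

locale fam =
  fixes a :: nat and S :: "nat set"
  assumes apos: "0 < a" and Ssub: "S \<subseteq> {..<a*a}"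
begin

lemma finS: "finite S" using Ssub finite_subset by blast

lemma e_div_lt: "e \<in> S \<Longrightarrow> e div a < a" using Ssub apos by (auto simp: div_less_iff_less_mult)
lemma e_mod_lt: "e mod a < a" using apos by simp

lemma base_ok:
  assumes u: "u < 2*a" and p: "p < a"
  shows "fst (port (GS a S) u p) < 2*a + card S \<and> fst (port (GS a S) u p) \<noteq> u \<and>
         snd (port (GS a S) u p) < deg (GS a S) (fst (port (GS a S) u p)) \<and>
         port (GS a S) (fst (port (GS a S) u p)) (snd (port (GS a S) u p)) = (u, p)"
proof (cases "u < a")
  case True
  have c: "code a u p = u*a+p" using True by (simp add: code_def)
  show ?thesis
  proof (cases "u*a+p \<in> S")
    case True
    have r: "rk S (u*a+p) < card S" using rk_lt[OF finS True] .
    have m: "port (GS a S) (2*a + rk S (u*a+p)) 0 = (u,p)"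
      using GS_port_mid[OF r, of 0 a] ur_rk[OF finS True] \<open>u<a\<close> p by simp
    show ?thesis using GS_port_base[OF u p] c True \<open>u<a\<close> r m by (simp add: marr_def GS_deg)
  next
    case False
    have c2: "code a (a+p) u = u*a+p" by (simp add: code_def)
    show ?thesis using GS_port_base[OF u p] GS_port_base[of "a+p" a u S] c c2 False \<open>u<a\<close> p
      by (simp add: bnext_def barr_def GS_deg)
  qed
next
  case False
  then obtain w where w: "u = a + w" "w < a" using u by (metis add_diff_inverse_nat mult_2 nat_add_left_cancel_less)
  have c: "code a u p = p*a+w" using False w by (simp add: code_def)
  show ?thesis
  proof (cases "p*a+w \<in> S")
    case True
    have r: "rk S (p*a+w) < card S" using rk_lt[OF finS True] .
    have m: "port (GS a S) (2*a + rk S (p*a+w)) 1 = (u,p)"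
      using GS_port_mid[OF r, of 1 a] ur_rk[OF finS True] w by simp
    show ?thesis using GS_port_base[OF u p] c True False r m u w by (simp add: marr_def GS_deg)
  next
    case False': False
    have c2: "code a p w = p*a+w" using p by (simp add: code_def)
    show ?thesis using GS_port_base[OF u p] GS_port_base[of p a w S] c c2 False False' w p u
      by (simp add: bnext_def barr_def GS_deg)
  qed
qed

lemma mid_ok:
  assumes j: "j < card S" and p: "p < 2"
  shows "fst (port (GS a S) (2*a+j) p) < 2*a + card S \<and> fst (port (GS a S) (2*a+j) p) \<noteq> 2*a+j \<and>
         snd (port (GS a S) (2*a+j) p) < deg (GS a S) (fst (port (GS a S) (2*a+j) p)) \<and>
         port (GS a S) (fst (port (GS a S) (2*a+j) p)) (snd (port (GS a S) (2*a+j) p)) = (2*a+j, p)"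
proof -
  define e where "e = ur S j"
  have eS: "e \<in> S" using ur_in[OF finS j] e_def by simp
  have re: "rk S e = j" using rk_ur[OF finS j] e_def by simp
  have elt: "e < a*a" using eS Ssub by auto
  have d: "e div a < a" using e_div_lt[OF eS] .
  have m: "e mod a < a" using e_mod_lt .
  show ?thesis
  proof (cases "p = 0")
    case True
    have b: "port (GS a S) (e div a) (e mod a) = (2*a+j, 0)"
      using GS_port_base[of "e div a" a "e mod a" S] d m code_dm0[OF apos elt] eS re
      by (simp add: marr_def)
    show ?thesis using GS_port_mid[OF j p, of a] True b d m by (simp add: e_def[symmetric] GS_deg)
  next
    case False
    then have p1: "p = 1" using p by simp
    have b: "port (GS a S) (a + e mod a) (e div a) = (2*a+j, 1)"
      using GS_port_base[of "a + e mod a" a "e div a" S] d m code_dm1[OF apos elt] eS re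
      by (simp add: marr_def)
    have mm: "e mod a < a + card S \<and> e mod a \<noteq> a + j" using m by auto
    show ?thesis using GS_port_mid[OF j p, of a] p1 b d mm by (simp add: e_def[symmetric] GS_deg)
  qed
qed

lemma code_inj: "u < 2*a \<Longrightarrow> p1 < a \<Longrightarrow> p2 < a \<Longrightarrow> code a u p1 = code a u p2 \<Longrightarrow> p1 = p2"
proof (cases "u < a")
  case True
  then show "code a u p1 = code a u p2 \<Longrightarrow> p1 = p2" by (simp add: code_def)
next
  case False
  assume "u < 2*a" "p1 < a" "p2 < a" "code a u p1 = code a u p2"
  then obtain w where w: "u = a + w" "w < a" using False by (metis add_diff_inverse_nat mult_2 nat_add_left_cancel_less)
  then have "p1*a+w = p2*a+w" using \<open>code a u p1 = code a u p2\<close> by (simp add: code_def)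
  then show ?thesis using apos by simp
qed

abbreviation "nn \<equiv> 2*a + card S"

lemma ports_ok: "\<forall>u < nn. \<forall>p < deg (GS a S) u.
        fst (port (GS a S) u p) < nn \<and> fst (port (GS a S) u p) \<noteq> u \<and>
        snd (port (GS a S) u p) < deg (GS a S) (fst (port (GS a S) u p)) \<and>
        port (GS a S) (fst (port (GS a S) u p)) (snd (port (GS a S) u p)) = (u, p)"
proof (intro allI impI)
  fix u p assume u: "u < nn" and p: "p < deg (GS a S) u"
  show "fst (port (GS a S) u p) < nn \<and> fst (port (GS a S) u p) \<noteq> u \<and>
        snd (port (GS a S) u p) < deg (GS a S) (fst (port (GS a S) u p)) \<and>
        port (GS a S) (fst (port (GS a S) u p)) (snd (port (GS a S) u p)) = (u, p)"
  proof (cases "u < 2*a")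
    case True
    then show ?thesis using base_ok[OF True] p by (simp add: GS_deg)
  next
    case False
    define j where "j = u - 2*a"
    have uj: "u = 2*a + j" and j: "j < card S" using False u j_def by auto
    have p2: "p < 2" using p False u by (simp add: GS_deg)
    show ?thesis using mid_ok[OF j p2] uj by simp
  qed
qed

lemma inj_ok: "\<forall>u < nn. inj_on (\<lambda>p. fst (port (GS a S) u p)) {..<deg (GS a S) u}"
proof (intro allI impI inj_onI)
  fix u p1 p2 assume u: "u < nn" and p1: "p1 \<in> {..<deg (GS a S) u}" and p2: "p2 \<in> {..<deg (GS a S) u}"
    and eq: "fst (port (GS a S) u p1) = fst (port (GS a S) u p2)"
  show "p1 = p2"
  proof (cases "u < 2*a")
    case True
    have q1: "p1 < a" and q2: "p2 < a" using p1 p2 True by (auto simp: GS_deg)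
    have bn: "\<And>p. p < a \<Longrightarrow> bnext a u p < 2*a" by (auto simp: bnext_def)
    show ?thesis
    proof (cases "code a u p1 \<in> S"; cases "code a u p2 \<in> S")
      assume c1: "code a u p1 \<in> S" and c2: "code a u p2 \<in> S"
      then have "rk S (code a u p1) = rk S (code a u p2)" using eq GS_port_base[OF True q1] GS_port_base[OF True q2] by simp
      then have "code a u p1 = code a u p2" using inj_onD[OF rk_inj[OF finS]] c1 c2 by blast
      then show ?thesis using code_inj[OF True q1 q2] by blast
    next
      assume c1: "code a u p1 \<in> S" and c2: "code a u p2 \<notin> S"
      then show ?thesis using eq GS_port_base[OF True q1] GS_port_base[OF True q2] bn[OF q2] by simp
    next
      assume c1: "code a u p1 \<notin> S" and c2: "code a u p2 \<in> S"
      then show ?thesis using eq GS_port_base[OF True q1] GS_port_base[OF True q2] bn[OF q1] by simp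
    next
      assume c1: "code a u p1 \<notin> S" and c2: "code a u p2 \<notin> S"
      then show ?thesis using eq GS_port_base[OF True q1] GS_port_base[OF True q2] by (auto simp: bnext_def split: if_splits)
    qed
  next
    case False
    define j where "j = u - 2*a"
    have uj: "u = 2*a + j" and j: "j < card S" using False u j_def by auto
    have q1: "p1 < 2" and q2: "p2 < 2" using p1 p2 False u by (auto simp: GS_deg)
    have eS: "ur S j \<in> S" using ur_in[OF finS j] .
    have dl: "ur S j div a < a" using e_div_lt[OF eS] .
    show ?thesis using eq GS_port_mid[OF j q1, of a] GS_port_mid[OF j q2, of a] uj q1 q2 dl
      by (auto split: if_splits)
  qed
qed

lemma edges_sym: "(u, w) \<in> pg_edges nn (GS a S) \<Longrightarrow> (w, u) \<in> pg_edges nn (GS a S)"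
proof -
  assume "(u, w) \<in> pg_edges nn (GS a S)"
  then obtain p where u: "u < nn" and p: "p < deg (GS a S) u" and w: "fst (port (GS a S) u p) = w"
    unfolding pg_edges_def by auto
  have h: "fst (port (GS a S) u p) < nn \<and>
        snd (port (GS a S) u p) < deg (GS a S) (fst (port (GS a S) u p)) \<and>
        port (GS a S) (fst (port (GS a S) u p)) (snd (port (GS a S) u p)) = (u, p)"
    using ports_ok u p by blast
  show ?thesis unfolding pg_edges_def using h w
    by (auto intro!: exI[of _ "snd (port (GS a S) u p)"])
qed

lemma edge_intro: "u < nn \<Longrightarrow> p < deg (GS a S) u \<Longrightarrow> (u, fst (port (GS a S) u p)) \<in> pg_edges nn (GS a S)"
  unfolding pg_edges_def by auto

lemma rt_sym: "(u, w) \<in> (pg_edges nn (GS a S))\<^sup>* \<Longrightarrow> (w, u) \<in> (pg_edges nn (GS a S))\<^sup>*"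
proof (induction rule: rtrancl_induct)
  case base then show ?case by simp
next
  case (step y z)
  then show ?case using edges_sym by (meson converse_rtrancl_into_rtrancl)
qed

lemma lr_reach: "u < a \<Longrightarrow> w < a \<Longrightarrow> (u, a + w) \<in> (pg_edges nn (GS a S))\<^sup>*"
proof -
  assume u: "u < a" and w: "w < a"
  have u2: "u < 2*a" using u by simp
  have c: "code a u w = u*a + w" using u by (simp add: code_def)
  show ?thesis
  proof (cases "u*a+w \<in> S")
    case True
    have r: "rk S (u*a+w) < card S" using rk_lt[OF finS True] .
    have e1: "(u, 2*a + rk S (u*a+w)) \<in> pg_edges nn (GS a S)"
      using edge_intro[of u w] GS_port_base[OF u2 w] c True u w by (simp add: GS_deg)
    have e2: "(2*a + rk S (u*a+w), a + w) \<in> pg_edges nn (GS a S)"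
      using edge_intro[of "2*a + rk S (u*a+w)" 1] GS_port_mid[OF r, of 1 a] ur_rk[OF finS True] r w
      by (simp add: GS_deg)
    show ?thesis using e1 e2 by (meson rtrancl.simps)
  next
    case False
    have e1: "(u, a + w) \<in> pg_edges nn (GS a S)"
      using edge_intro[of u w] GS_port_base[OF u2 w] c False u w by (simp add: GS_deg bnext_def)
    then show ?thesis by blast
  qed
qed

lemma reach0: "x < nn \<Longrightarrow> (0, x) \<in> (pg_edges nn (GS a S))\<^sup>*"
proof -
  assume x: "x < nn"
  have R: "\<And>w. w < a \<Longrightarrow> (0, a + w) \<in> (pg_edges nn (GS a S))\<^sup>*" using lr_reach apos by blast
  have L: "\<And>u. u < a \<Longrightarrow> (0, u) \<in> (pg_edges nn (GS a S))\<^sup>*"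
  proof -
    fix u assume "u < a"
    have "(a + 0, u) \<in> (pg_edges nn (GS a S))\<^sup>*" using rt_sym[OF lr_reach[OF \<open>u<a\<close> apos]] .
    then show "(0, u) \<in> (pg_edges nn (GS a S))\<^sup>*" using R[OF apos] by simp
  qed
  show ?thesis
  proof (cases "x < 2*a")
    case True
    then show ?thesis
    proof (cases "x < a")
      case True then show ?thesis using L by blast
    next
      case False
      then obtain w where "x = a + w" "w < a" using \<open>x < 2*a\<close> by (metis add_diff_inverse_nat mult_2 nat_add_left_cancel_less)
      then show ?thesis using R by blast
    qed
  next
    case False
    define j where "j = x - 2*a"
    have xj: "x = 2*a + j" and j: "j < card S" using False x j_def by auto
    have eS: "ur S j \<in> S" using ur_in[OF finS j] .
    have dl: "ur S j div a < a" using e_div_lt[OF eS] .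
    have "(2*a+j, ur S j div a) \<in> pg_edges nn (GS a S)"
      using edge_intro[of "2*a+j" 0] GS_port_mid[OF j, of 0 a] j by (simp add: GS_deg)
    then have "(ur S j div a, 2*a+j) \<in> pg_edges nn (GS a S)" using edges_sym by blast
    then show ?thesis using L[OF dl] xj by (meson rtrancl.simps)
  qed
qed

lemma wf: "pgraph_wf nn (GS a S)"
  unfolding pgraph_wf_def
proof (intro conjI)
  show "\<forall>u<nn. \<forall>w<nn. (u, w) \<in> (pg_edges nn (GS a S))\<^sup>*"
    using reach0 rt_sym by (meson rtrancl_trans)
  show "\<forall>u. nn \<le> u \<longrightarrow> deg (GS a S) u = 0" by (simp add: GS_deg)
  show "\<forall>u p. nn \<le> u \<or> deg (GS a S) u \<le> p \<longrightarrow> port (GS a S) u p = (0, 0)"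
    by (auto intro!: GS_port_out simp: GS_deg split: if_splits)
qed (use ports_ok inj_ok in auto)

end

type_synonym st = "(nat + nat) \<times> (nat \<times> nat \<times> nat) list \<times> nat set \<times> nat set"

fun simO :: "algorithm \<Rightarrow> bool list \<Rightarrow> nat \<Rightarrow> (nat \<Rightarrow> nat \<Rightarrow> bool) \<Rightarrow> nat \<Rightarrow> st option" where
  "simO A x a Orc 0 = Some (Inl 0, [], {}, {})"
| "simO A x a Orc (Suc k) = (case simO A x a Orc k of None \<Rightarrow> None | Some (pos, h, K, Tr) \<Rightarrow>
   (case A x a h of None \<Rightarrow> None | Some p \<Rightarrow>
     (case pos of
       Inl u \<Rightarrow> if p < a then
           (if (if code a u p \<in> Tr then code a u p \<in> K else Orc k (code a u p))
            then Some (Inr (code a u p), h @ [(p, marr a u, 2)], insert (code a u p) K, insert (code a u p) Tr)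
            else Some (Inl (bnext a u p), h @ [(p, barr a u, a)], K, insert (code a u p) Tr))
         else None
     | Inr e \<Rightarrow> if p = 0 then Some (Inl (e div a), h @ [(0, e mod a, a)], K, Tr)
               else if p = 1 then Some (Inl (a + e mod a), h @ [(1, e div a, a)], K, Tr)
               else None)))"

context fam
begin

fun absp :: "nat + nat \<Rightarrow> nat" where
  "absp (Inl u) = u"
| "absp (Inr e) = 2*a + rk S e"

definition invs :: "st \<Rightarrow> bool" where
  "invs st \<longleftrightarrow> (case st of (pos, h, K, Tr) \<Rightarrow> K = Tr \<inter> S \<and> finite Tr \<and>
     (\<forall>u. pos = Inl u \<longrightarrow> u < 2*a) \<and> (\<forall>e. pos = Inr e \<longrightarrow> e \<in> K))"

abbreviation "OS \<equiv> (\<lambda>(i::nat) e. e \<in> S)"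

lemma sim_inv: "simO A x a OS k = Some st \<Longrightarrow> invs st"
proof (induction k arbitrary: st)
  case 0 then show ?case by (auto simp: invs_def apos)
next
  case (Suc k)
  then obtain pos h K Tr where sk: "simO A x a OS k = Some (pos, h, K, Tr)"
    by (cases "simO A x a OS k") auto
  have I: "invs (pos, h, K, Tr)" using Suc.IH[OF sk] .
  obtain p where p: "A x a h = Some p" using Suc.prems sk by (cases "A x a h") auto
  show ?case
  proof (cases pos)
    case (Inl u)
    have u: "u < 2*a" using I Inl by (simp add: invs_def)
    have bn: "\<And>p. p < a \<Longrightarrow> bnext a u p < 2*a" by (auto simp: bnext_def)
    show ?thesis using Suc.prems sk p Inl I bn
      by (auto simp: invs_def split: if_splits)
  next
    case (Inr e)
    have eS: "e \<in> S" using I Inr by (auto simp: invs_def)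
    have "e div a < a" using e_div_lt[OF eS] .
    then show ?thesis using Suc.prems sk p Inr I
      by (auto simp: invs_def split: if_splits)
  qed
qed

lemma deg0: "deg (GS a S) 0 = a" using apos by (simp add: GS_deg)

lemma run_sim: "run A x (GS a S) 0 k = map_option (\<lambda>(pos,h,K,Tr). (absp pos, h)) (simO A x a OS k)"
proof (induction k)
  case 0 then show ?case by simp
next
  case (Suc k)
  show ?case
  proof (cases "simO A x a OS k")
    case None
    then show ?thesis using Suc.IH by simp
  next
    case (Some st)
    then obtain pos h K Tr where sk: "simO A x a OS k = Some (pos, h, K, Tr)"
      by (cases st) auto
    have I: "invs (pos, h, K, Tr)" using sim_inv[OF sk] .
    have rk: "run A x (GS a S) 0 k = Some (absp pos, h)" using Suc.IH sk by simp
    show ?thesis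
    proof (cases "A x a h")
      case None
      then show ?thesis using rk sk deg0 by simp
    next
      case (Some p)
      show ?thesis
      proof (cases pos)
        case (Inl u)
        have u: "u < 2*a" using I Inl by (simp add: invs_def)
        have KT: "K = Tr \<inter> S" using I by (simp add: invs_def)
        have cond: "(if code a u p \<in> Tr then code a u p \<in> K else code a u p \<in> S) = (code a u p \<in> S)"
          using KT by auto
        show ?thesis
        proof (cases "p < a")
          case True
          have bn: "bnext a u p < 2*a" using True by (auto simp: bnext_def)
          have r: "code a u p \<in> S \<Longrightarrow> rk S (code a u p) < card S" using rk_lt[OF finS] by blast
          show ?thesis using rk sk deg0 Some Inl True GS_port_base[OF u True, of S] cond bn r u
            by (auto simp: GS_deg)
        next
          case False
          then show ?thesis using rk sk deg0 Some Inl u by (simp add: GS_deg)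
        qed
      next
        case (Inr e)
        have eS: "e \<in> S" using I Inr by (auto simp: invs_def)
        have r: "rk S e < card S" using rk_lt[OF finS eS] .
        have ure: "ur S (rk S e) = e" using ur_rk[OF finS eS] .
        have dl: "e div a < a" using e_div_lt[OF eS] .
        have ml: "e mod a < a" using e_mod_lt .
        have d2: "deg (GS a S) (2*a + rk S e) = 2" using r by (simp add: GS_deg)
        show ?thesis
        proof (cases "p < 2")
          case True
          then show ?thesis using rk sk deg0 Some Inr GS_port_mid[OF r True, of a] ure d2 dl ml
            by (auto simp: GS_deg)
        next
          case False
          then show ?thesis using rk sk deg0 Some Inr d2 by simp
        qed
      qed
    qed
  qed
qed

definition newspec :: "algorithm \<Rightarrow> bool list \<Rightarrow> nat \<Rightarrow> bool" where
  "newspec A x k \<longleftrightarrow> (\<exists>u h K Tr p. simO A x a OS k = Some (Inl u, h, K, Tr) \<and> A x a h = Some p \<and>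
      p < a \<and> code a u p \<notin> Tr \<and> code a u p \<in> S)"

lemma simD: "j \<le> k \<Longrightarrow> simO A x a OS j = simO A x a (\<lambda>i e. i \<in> {i. i < k \<and> newspec A x i}) j"
proof (induction j)
  case 0 then show ?case by simp
next
  case (Suc j)
  have jk: "j < k" using Suc.prems by simp
  have IH: "simO A x a OS j = simO A x a (\<lambda>i e. i \<in> {i. i < k \<and> newspec A x i}) j"
    using Suc.IH jk by simp
  show ?case
  proof (cases "simO A x a OS j")
    case None
    then show ?thesis using IH by simp
  next
    case (Some st)
    then obtain pos h K Tr where sk: "simO A x a OS j = Some (pos, h, K, Tr)" by (cases st) auto
    have sk2: "simO A x a (\<lambda>i e. i \<in> {i. i < k \<and> newspec A x i}) j = Some (pos, h, K, Tr)"
      using sk IH by simp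
    have key: "\<And>u p. pos = Inl u \<Longrightarrow> A x a h = Some p \<Longrightarrow> p < a \<Longrightarrow> code a u p \<notin> Tr \<Longrightarrow>
        (j \<in> {i. i < k \<and> newspec A x i}) = (code a u p \<in> S)"
      using jk sk unfolding newspec_def by auto
    show ?thesis
    proof (cases "A x a h")
      case None then show ?thesis using sk sk2 by simp
    next
      case (Some p)
      show ?thesis
      proof (cases pos)
        case (Inl u)
        show ?thesis
        proof (cases "p < a \<and> code a u p \<notin> Tr")
          case True
          then show ?thesis using sk sk2 Some Inl key[OF Inl Some] by simp
        next
          case False
          then show ?thesis using sk sk2 Some Inl by auto
        qed
      next
        case (Inr e)
        then show ?thesis using sk sk2 Some by simp
      qed
    qed
  qed
qed

lemma sim_card: "simO A x a OS k = Some (pos, h, K, Tr) \<Longrightarrow> card K = card {i. i < k \<and> newspec A x i}"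
proof (induction k arbitrary: pos h K Tr)
  case 0 then show ?case by simp
next
  case (Suc k)
  then obtain pos0 h0 K0 Tr0 where sk: "simO A x a OS k = Some (pos0, h0, K0, Tr0)"
    by (cases "simO A x a OS k") auto
  have I: "invs (pos0, h0, K0, Tr0)" using sim_inv[OF sk] .
  have KT: "K0 = Tr0 \<inter> S" and fT: "finite Tr0" using I by (auto simp: invs_def)
  have fK: "finite K0" using KT fT by simp
  obtain p where p: "A x a h0 = Some p" using Suc.prems sk by (cases "A x a h0") auto
  have IH: "card K0 = card {i. i < k \<and> newspec A x i}" using Suc.IH[OF sk] .
  have split: "{i. i < Suc k \<and> newspec A x i} = {i. i < k \<and> newspec A x i} \<union> {i. i = k \<and> newspec A x k}"
    by (auto simp: less_Suc_eq)
  have fin: "finite {i. i < k \<and> newspec A x i}" by simp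
  show ?case
  proof (cases "newspec A x k")
    case True
    then obtain u p' where pu: "pos0 = Inl u" "A x a h0 = Some p'" "p' < a" "code a u p' \<notin> Tr0" "code a u p' \<in> S"
      using sk unfolding newspec_def by auto
    have pp: "p' = p" using pu p by simp
    have K: "K = insert (code a u p) K0" using Suc.prems sk p pu pp by simp
    have nK: "code a u p \<notin> K0" using pu pp KT by simp
    have "card K = Suc (card K0)" using K nK fK by simp
    moreover have "card {i. i < Suc k \<and> newspec A x i} = Suc (card {i. i < k \<and> newspec A x i})"
      using True split fin by (simp add: card_insert_if)
    ultimately show ?thesis using IH by simp
  next
    case False
    have K: "K = K0"
    proof (cases pos0)
      case (Inl u)
      have "\<not> (p < a \<and> code a u p \<notin> Tr0 \<and> code a u p \<in> S)" using False sk p Inl unfolding newspec_def by auto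
      then show ?thesis using Suc.prems sk p Inl KT by (auto split: if_splits)
    next
      case (Inr e)
      then show ?thesis using Suc.prems sk p by (auto split: if_splits)
    qed
    have "{i. i < Suc k \<and> newspec A x i} = {i. i < k \<and> newspec A x i}" using False by (auto simp: less_Suc_eq)
    then show ?thesis using K IH by simp
  qed
qed

lemma sim_mono: "simO A x a OS k = Some (pos, h, K, Tr) \<Longrightarrow> i \<le> k \<Longrightarrow>
   \<exists>pos' h' K' Tr'. simO A x a OS i = Some (pos', h', K', Tr') \<and> K' \<subseteq> K"
proof (induction k arbitrary: pos h K Tr)
  case 0 then show ?case by simp
next
  case (Suc k)
  then obtain pos0 h0 K0 Tr0 where sk: "simO A x a OS k = Some (pos0, h0, K0, Tr0)"
    by (cases "simO A x a OS k") auto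
  obtain p where p: "A x a h0 = Some p" using Suc.prems sk by (cases "A x a h0") auto
  have KK: "K0 \<subseteq> K" using Suc.prems(1) sk p by (auto split: if_splits sum.splits)
  show ?case
  proof (cases "i = Suc k")
    case True then show ?thesis using Suc.prems by simp
  next
    case False
    then have "i \<le> k" using Suc.prems by simp
    then show ?thesis using Suc.IH[OF sk] KK by blast
  qed
qed

lemma cover:
  assumes ex: "explores_in A x nn (GS a S) 0 k"
  shows "\<exists>pos h Tr. simO A x a OS k = Some (pos, h, S, Tr)"
proof -
  obtain u hh where r: "run A x (GS a S) 0 k = Some (u, hh)" using ex unfolding explores_in_def by auto
  then obtain pos h K Tr where sk: "simO A x a OS k = Some (pos, h, K, Tr)"
    using run_sim[of A x k] by (cases "simO A x a OS k") auto
  have KS: "K \<subseteq> S" using sim_inv[OF sk] by (auto simp: invs_def)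
  have "S \<subseteq> K"
  proof
    fix e assume eS: "e \<in> S"
    have "2*a + rk S e < nn" using rk_lt[OF finS eS] by simp
    then obtain i where i: "i \<le> k" and vi: "2*a + rk S e = fst (the (run A x (GS a S) 0 i))"
      using ex unfolding explores_in_def by blast
    obtain pos' h' K' Tr' where si: "simO A x a OS i = Some (pos', h', K', Tr')" and KK: "K' \<subseteq> K"
      using sim_mono[OF sk i] by blast
    have ap: "absp pos' = 2*a + rk S e" using vi run_sim[of A x i] si by simp
    have I: "invs (pos', h', K', Tr')" using sim_inv[OF si] .
    show "e \<in> K"
    proof (cases pos')
      case (Inl u)
      then show ?thesis using I ap by (simp add: invs_def)
    next
      case (Inr e')
      have e'K: "e' \<in> K'" using I Inr by (auto simp: invs_def)
      have e'S: "e' \<in> S" using I Inr by (auto simp: invs_def)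
      have "rk S e' = rk S e" using ap Inr by simp
      then have "e' = e" using inj_onD[OF rk_inj[OF finS]] e'S eS by blast
      then show ?thesis using e'K KK by blast
    qed
  qed
  then have "K = S" using KS by blast
  then show ?thesis using sk by blast
qed

definition Dset :: "algorithm \<Rightarrow> bool list \<Rightarrow> nat \<Rightarrow> nat set" where
  "Dset A x k = {i. i < k \<and> newspec A x i}"

lemma decode:
  assumes ex: "explores_in A x nn (GS a S) 0 k"
  shows "S = fst (snd (snd (the (simO A x a (\<lambda>i e. i \<in> Dset A x k) k))))"
    and "Dset A x k \<subseteq> {..<k}" and "card (Dset A x k) = card S"
proof -
  obtain pos h Tr where sk: "simO A x a OS k = Some (pos, h, S, Tr)" using cover[OF ex] by blast
  have "simO A x a (\<lambda>i e. i \<in> Dset A x k) k = Some (pos, h, S, Tr)"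
    using simD[of k k A x] sk unfolding Dset_def by simp
  then show "S = fst (snd (snd (the (simO A x a (\<lambda>i e. i \<in> Dset A x k) k))))" by simp
  show "Dset A x k \<subseteq> {..<k}" unfolding Dset_def by auto
  show "card (Dset A x k) = card S" using sim_card[OF sk] unfolding Dset_def by simp
qed

end

lemma fact_lower: "fact m * (m+1)^k \<le> (fact (m+k) :: nat)"
proof (induction k)
  case 0 then show ?case by simp
next
  case (Suc k)
  have "fact m * (m+1)^(Suc k) = (fact m * (m+1)^k) * (m+1)" by (simp add: algebra_simps)
  also have "\<dots> \<le> fact (m+k) * (m+k+1)" using Suc.IH by (intro mult_mono) auto
  also have "\<dots> = fact (m + Suc k)" by (simp add: algebra_simps)
  finally show ?case .
qed

lemma choose_lower: "k \<le> M \<Longrightarrow> (M - k + 1)^k \<le> fact k * (M choose k)"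
proof -
  assume kM: "k \<le> M"
  have "fact (M-k) * (M - k + 1)^k \<le> (fact (M - k + k) :: nat)" using fact_lower .
  also have "\<dots> = fact k * fact (M-k) * (M choose k)" using binomial_fact_lemma[OF kM] kM by simp
  finally have "fact (M-k) * (M - k + 1)^k \<le> fact (M-k) * (fact k * (M choose k))" by (simp add: ac_simps)
  then show ?thesis by simp
qed

lemma sq_lt_pow: "(a::nat) * a < 4^a"
proof -
  have "a < 2^a" by (rule less_exp)
  then have "a*a < 2^a * 2^a" by (intro mult_strict_mono) auto
  also have "\<dots> = 4^a" by (simp add: power_mult_distrib[symmetric])
  finally show ?thesis .
qed

lemma numeric:
  fixes a b T ph :: nat
  assumes a: "2 \<le> a" and b: "b \<le> a * ph" and T: "T \<le> 1 \<or> 16 * 2^ph * T \<le> a*a"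
  shows "2^(b+1) * T * (T choose a) < (a*a choose a)"
proof (cases "T \<le> 1")
  case True
  then have "T choose a = 0" using a by simp
  moreover have "0 < (a*a choose a)" using le_square[of a] by (simp only: zero_less_binomial_iff)
  ultimately show ?thesis by (metis mult_0_right)
next
  case False
  then have T16: "16 * 2^ph * T \<le> a*a" and T1: "1 \<le> T" using T by auto
  define L where "L = a*a - a + 1"
  have aa: "a \<le> a*a" using a by simp
  have a2: "2*a \<le> a*a" using a by (intro mult_right_mono) auto
  have L2: "a*a \<le> 2*L"
  proof -
    obtain X where X: "X = a*a" by blast
    have "2*a \<le> X" using a2 X by simp
    then have "X \<le> 2*(X - a + 1)" by arith
    then show ?thesis using X L_def by simp
  qed
  have Lb: "8 * 2^ph * T \<le> L" using T16 L2 by linarith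
  have "(8 * 2^ph * T)^a \<le> L^a" using Lb by (rule power_mono) simp
  then have P1: "8^a * (2^(ph*a) * T^a) \<le> L^a" by (simp add: power_mult_distrib power_mult mult.assoc)
  have "T \<le> 16 * 2^ph * T" by simp
  then have "T \<le> a*a" using T16 by linarith
  then have "2*T < 2*4^a" using sq_lt_pow[of a] by linarith
  also have "\<dots> \<le> 8^a"
  proof -
    have "2*4^a \<le> (2::nat)^a * 4^a" using a by (intro mult_right_mono) (auto simp: self_le_power)
    also have "\<dots> = (8::nat)^a" by (simp add: power_mult_distrib[symmetric])
    finally show ?thesis .
  qed
  finally have T8: "2*T < 8^a" .
  have pos: "0 < 2^(ph*a) * T^a" using T1 by simp
  have "2^(b+1) * T * (T choose a) * fact a \<le> 2^(b+1) * T * T^a"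
    using binomial_fact_pow[of T a] by (simp add: mult.assoc)
  also have "\<dots> \<le> 2 * 2^(ph*a) * T * T^a"
  proof -
    have "2^(b+1) \<le> (2::nat) * 2^(ph*a)" using b by (simp add: mult.commute)
    then show ?thesis by (intro mult_right_mono) auto
  qed
  also have "\<dots> = (2*T) * (2^(ph*a) * T^a)" by (simp add: ac_simps)
  also have "\<dots> < 8^a * (2^(ph*a) * T^a)" using T8 pos by simp
  also have "\<dots> \<le> L^a" using P1 .
  also have "\<dots> \<le> fact a * (a*a choose a)" unfolding L_def using choose_lower[OF aa] .
  finally have "2^(b+1) * T * (T choose a) * fact a < (a*a choose a) * fact a" by (simp add: ac_simps)
  then show ?thesis by (meson mult_less_cancel2)
qed

lemma wf_deg_le: "pgraph_wf n G \<Longrightarrow> u < n \<Longrightarrow> deg G u \<le> n"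
proof -
  assume w: "pgraph_wf n G" and u: "u < n"
  have inj: "inj_on (\<lambda>p. fst (port G u p)) {..<deg G u}" using w u unfolding pgraph_wf_def by blast
  have img: "(\<lambda>p. fst (port G u p)) ` {..<deg G u} \<subseteq> {..<n}" using w u unfolding pgraph_wf_def by auto
  have "card {..<deg G u} \<le> card {..<n}" using card_inj_on_le[OF inj img] by simp
  then show ?thesis by simp
qed

lemma finite_wf: "finite {G. pgraph_wf n G}"
proof -
  define enc where "enc G = (map (deg G) [0..<n], map (\<lambda>u. map (port G u) [0..<n]) [0..<n])" for G :: pgraph
  define B1 where "B1 = {xs. set xs \<subseteq> {..n} \<and> length xs = n}"
  define B2 where "B2 = {ys. set ys \<subseteq> {zs. set zs \<subseteq> {..n} \<times> {..n} \<and> length zs = n} \<and> length ys = n}"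
  have fB: "finite (B1 \<times> B2)" unfolding B1_def B2_def
    by (intro finite_cartesian_product finite_lists_length_eq) auto
  have img: "enc ` {G. pgraph_wf n G} \<subseteq> B1 \<times> B2"
  proof
    fix y assume "y \<in> enc ` {G. pgraph_wf n G}"
    then obtain G where w: "pgraph_wf n G" and y: "y = enc G" by auto
    have d: "\<And>u. u < n \<Longrightarrow> deg G u \<le> n" using wf_deg_le[OF w] .
    have pt: "\<And>u p. u < n \<Longrightarrow> port G u p \<in> {..n} \<times> {..n}"
    proof -
      fix u p assume u: "u < n"
      show "port G u p \<in> {..n} \<times> {..n}"
      proof (cases "p < deg G u")
        case True
        have "fst (port G u p) < n" and "snd (port G u p) < deg G (fst (port G u p))"
          using w u True unfolding pgraph_wf_def by auto
        moreover then have "deg G (fst (port G u p)) \<le> n" using d by blast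
        ultimately show ?thesis by (cases "port G u p") auto
      next
        case False
        then have "port G u p = (0,0)" using w unfolding pgraph_wf_def by auto
        then show ?thesis by simp
      qed
    qed
    show "y \<in> B1 \<times> B2" using y d pt unfolding enc_def B1_def B2_def
      by (auto, (metis atMost_iff mem_Sigma_iff pt)+)
  qed
  have inj: "inj_on enc {G. pgraph_wf n G}"
  proof (rule inj_onI)
    fix G1 G2 assume w1: "G1 \<in> {G. pgraph_wf n G}" and w2: "G2 \<in> {G. pgraph_wf n G}" and e: "enc G1 = enc G2"
    have w1': "pgraph_wf n G1" and w2': "pgraph_wf n G2" using w1 w2 by auto
    have dd: "\<And>u. deg G1 u = deg G2 u"
    proof -
      fix u show "deg G1 u = deg G2 u"
      proof (cases "u < n")
        case True
        have "map (deg G1) [0..<n] = map (deg G2) [0..<n]" using e unfolding enc_def by simp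
        then show ?thesis using True by (simp add: map_eq_conv)
      next
        case False then show ?thesis using w1' w2' unfolding pgraph_wf_def by auto
      qed
    qed
    have pp: "\<And>u p. port G1 u p = port G2 u p"
    proof -
      fix u p show "port G1 u p = port G2 u p"
      proof (cases "u < n \<and> p < n")
        case True
        have "map (\<lambda>u. map (port G1 u) [0..<n]) [0..<n] = map (\<lambda>u. map (port G2 u) [0..<n]) [0..<n]"
          using e unfolding enc_def by simp
        then show ?thesis using True by (simp add: map_eq_conv)
      next
        case False
        then have "n \<le> u \<or> deg G1 u \<le> p"
          using wf_deg_le[OF w1', of u] by (cases "u < n") auto
        moreover have "n \<le> u \<or> deg G2 u \<le> p" using calculation dd by simp
        ultimately show ?thesis using w1' w2' unfolding pgraph_wf_def by metis
      qed
    qed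
    show "G1 = G2"
      using dd pp by (cases G1, cases G2) (auto simp: fun_eq_iff)
  qed
  show ?thesis using inj_on_finite[OF inj img fB] .
qed

lemma max_advice_ge: "pgraph_wf n G \<Longrightarrow> v < n \<Longrightarrow> length (f G v) \<le> max_advice f n"
proof -
  assume w: "pgraph_wf n G" and v: "v < n"
  have eq: "{length (f G v) | G v. pgraph_wf n G \<and> v < n} = (\<lambda>(G,v). length (f G v)) ` ({G. pgraph_wf n G} \<times> {..<n})"
    by auto
  have "finite {length (f G v) | G v. pgraph_wf n G \<and> v < n}"
    unfolding eq using finite_wf by auto
  then show ?thesis unfolding max_advice_def using w v by (intro Max_ge) auto
qed

lemma geo_lt: "(\<Sum>i\<le>b. (2::nat)^i) < 2^(b+1)"
  by (induction b) auto

lemma counting: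
  fixes f :: "pgraph \<Rightarrow> nat \<Rightarrow> bool list" and A :: algorithm
  assumes a: "2 \<le> a"
    and bnd: "\<And>S. S \<subseteq> {..<a*a} \<Longrightarrow> card S = a \<Longrightarrow> length (f (GS a S) 0) \<le> b"
    and num: "2^(b+1) * T * (T choose a) < (a*a choose a)"
  shows "\<exists>S. S \<subseteq> {..<a*a} \<and> card S = a \<and> \<not> (\<exists>k<T. explores_in A (f (GS a S) 0) (3*a) (GS a S) 0 k)"
proof (rule ccontr)
  assume "\<not> ?thesis"
  then have all: "\<And>S. S \<subseteq> {..<a*a} \<Longrightarrow> card S = a \<Longrightarrow> \<exists>k<T. explores_in A (f (GS a S) 0) (3*a) (GS a S) 0 k"
    by blast
  define Fam where "Fam = {S. S \<subseteq> {..<a*a} \<and> card S = a}"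
  define kS where "kS S = (SOME k. k < T \<and> explores_in A (f (GS a S) 0) (3*a) (GS a S) 0 k)" for S
  define Phi where "Phi S = (f (GS a S) 0, kS S, fam.Dset a S A (f (GS a S) 0) (kS S))" for S
  define dec where "dec y = (case y of (x, k, D) \<Rightarrow> fst (snd (snd (the (simO A x a (\<lambda>i e. i \<in> D) k)))))"
    for y :: "bool list \<times> nat \<times> nat set"
  define Ls where "Ls = {xs :: bool list. set xs \<subseteq> UNIV \<and> length xs \<le> b}"
  define Ds where "Ds = {D. D \<subseteq> {..<T} \<and> card D = a}"
  have props: "\<And>S. S \<in> Fam \<Longrightarrow> dec (Phi S) = S \<and> Phi S \<in> Ls \<times> {..<T} \<times> Ds"
  proof -
    fix S assume S: "S \<in> Fam"
    then have Ssub: "S \<subseteq> {..<a*a}" and cS: "card S = a" unfolding Fam_def by auto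
    interpret fam a S using a Ssub by unfold_locales auto
    have ex: "kS S < T \<and> explores_in A (f (GS a S) 0) (3*a) (GS a S) 0 (kS S)"
      unfolding kS_def using all[OF Ssub cS] by (rule someI_ex)
    have ex': "explores_in A (f (GS a S) 0) (2*a + card S) (GS a S) 0 (kS S)" using ex cS by simp
    note d = decode[OF ex']
    have "dec (Phi S) = S" unfolding dec_def Phi_def using d(1) by simp
    moreover have "Phi S \<in> Ls \<times> {..<T} \<times> Ds"
      unfolding Phi_def Ls_def Ds_def using d(2,3) ex cS bnd[OF Ssub cS] by auto
    ultimately show "dec (Phi S) = S \<and> Phi S \<in> Ls \<times> {..<T} \<times> Ds" by blast
  qed
  have inj: "inj_on Phi Fam" by (rule inj_on_inverseI[where g = dec]) (use props in blast)
  have img: "Phi ` Fam \<subseteq> Ls \<times> {..<T} \<times> Ds" using props by blast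
  have fLs: "finite Ls" unfolding Ls_def by (rule finite_lists_length_le) simp
  have fDs: "finite Ds" unfolding Ds_def by simp
  have cLs: "card Ls < 2^(b+1)" unfolding Ls_def using card_lists_length_le[of "UNIV :: bool set" b] geo_lt[of b]
    by simp
  have cDs: "card Ds = T choose a" unfolding Ds_def using n_subsets[of "{..<T}" a] by simp
  have "card Fam \<le> card (Ls \<times> {..<T} \<times> Ds)"
    using card_inj_on_le[OF inj img] fLs fDs by simp
  also have "\<dots> = card Ls * (T * (T choose a))" using cDs by (simp add: card_cartesian_product)
  also have "\<dots> \<le> 2^(b+1) * (T * (T choose a))" using cLs by (intro mult_right_mono) auto
  also have "\<dots> < (a*a choose a)" using num by (simp add: mult.assoc)
  also have "\<dots> = card Fam" unfolding Fam_def using n_subsets[of "{..<a*a}" a] by simp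
  finally show False by simp
qed

theorem mainTheorem8:
  fixes \<phi> :: "nat \<Rightarrow> nat"
    and f :: "pgraph \<Rightarrow> nat \<Rightarrow> bool list"
    and A :: algorithm
  assumes "(\<lambda>n. real (max_advice f n)) \<in> o(\<lambda>n. real n * real (\<phi> n))"
  shows "\<exists>c > 0. infinite {n. \<exists>G v. pgraph_wf n G \<and> v < n \<and>
            \<not> (\<exists>k. real k < c * real n ^ 2 / 2 ^ \<phi> n \<and> explores_in A (f G v) n G v k)}"
proof -
  have ev: "eventually (\<lambda>n. norm (real (max_advice f n)) \<le> (1/3) * norm (real n * real (\<phi> n))) at_top"
    using landau_o.smallD[OF assms, of "1/3"] by simp
  then obtain N0 where N0: "\<And>n. n \<ge> N0 \<Longrightarrow> real (max_advice f n) \<le> 1/3 * (real n * real (\<phi> n))"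
    by (auto simp: eventually_at_top_linorder)
  show ?thesis
  proof (intro exI[of _ "1/288"] conjI)
    show "(1/288::real) > 0" by simp
    show "infinite {n. \<exists>G v. pgraph_wf n G \<and> v < n \<and>
            \<not> (\<exists>k. real k < 1/288 * real n ^ 2 / 2 ^ \<phi> n \<and> explores_in A (f G v) n G v k)}"
      unfolding infinite_nat_iff_unbounded_le
    proof
      fix m
      define a where "a = m + N0 + 2"
      define n where "n = 3*a"
      define ph where "ph = \<phi> n"
      define b where "b = max_advice f n"
      define B where "B = 1/288 * real n ^ 2 / 2 ^ \<phi> n"
      define T where "T = nat \<lceil>B\<rceil>"
      have a2: "2 \<le> a" unfolding a_def by simp
      have nN: "n \<ge> N0" unfolding n_def a_def by simp
      have "real b \<le> 1/3 * (real n * real ph)" using N0[OF nN] unfolding b_def ph_def by simp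
      also have "\<dots> = real (a * ph)" unfolding n_def by simp
      finally have bb: "b \<le> a * ph" by linarith
      have Tc: "T \<le> 1 \<or> 16 * 2^ph * T \<le> a*a"
      proof (cases "T \<le> 1")
        case True then show ?thesis by simp
      next
        case False
        then have c2: "2 \<le> \<lceil>B\<rceil>" unfolding T_def by linarith
        have B1: "1 < B"
        proof (rule ccontr)
          assume "\<not> 1 < B"
          then have "\<lceil>B\<rceil> \<le> 1" by (simp add: ceiling_le_iff)
          then show False using c2 by simp
        qed
        have "real T = real_of_int \<lceil>B\<rceil>" unfolding T_def using c2 by simp
        also have "\<dots> < B + 1" using ceiling_correct[of B] by linarith 
        also have "\<dots> < 2 * B" using B1 by simp
        also have "\<dots> = real (a*a) / (16 * 2^ph)" unfolding B_def n_def ph_def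
          by (simp add: power2_eq_square field_simps)
        finally have "real T * (16 * 2^ph) < real (a*a)" by (simp add: field_simps)
        then have "real (16 * 2^ph * T) < real (a*a)" by (simp add: ac_simps)
        then show ?thesis by linarith
      qed
      have bnd: "\<And>S. S \<subseteq> {..<a*a} \<Longrightarrow> card S = a \<Longrightarrow> length (f (GS a S) 0) \<le> b"
      proof -
        fix S :: "nat set" assume Ssub: "S \<subseteq> {..<a*a}" and cS: "card S = a"
        interpret fam a S using a2 Ssub by unfold_locales auto
        have "pgraph_wf n (GS a S)" using wf cS unfolding n_def by simp
        then show "length (f (GS a S) 0) \<le> b" unfolding b_def
          by (rule max_advice_ge) (simp add: n_def a_def)
      qed
      obtain S where Ssub: "S \<subseteq> {..<a*a}" and cS: "card S = a"
        and nex: "\<not> (\<exists>k<T. explores_in A (f (GS a S) 0) (3*a) (GS a S) 0 k)"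
        using counting[of a f b T A, OF a2 bnd numeric[OF a2 bb Tc]] by blast
      interpret fam a S using a2 Ssub by unfold_locales auto
      have w: "pgraph_wf n (GS a S)" using wf cS unfolding n_def by simp
      have nk: "\<not> (\<exists>k. real k < 1/288 * real n ^ 2 / 2 ^ \<phi> n \<and> explores_in A (f (GS a S) 0) n (GS a S) 0 k)"
      proof
        assume "\<exists>k. real k < 1/288 * real n ^ 2 / 2 ^ \<phi> n \<and> explores_in A (f (GS a S) 0) n (GS a S) 0 k"
        then obtain k where k: "real k < B" and e: "explores_in A (f (GS a S) 0) n (GS a S) 0 k"
          unfolding B_def by blast
        have "int k < \<lceil>B\<rceil>" using k by (simp add: less_ceiling_iff)
        then have "k < T" unfolding T_def by linarith
        then show False using nex e unfolding n_def by blast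
      qed
      have "n \<ge> m" unfolding n_def a_def by simp
      moreover have "0 < n" unfolding n_def a_def by simp
      ultimately show "\<exists>n\<ge>m. n \<in> {n. \<exists>G v. pgraph_wf n G \<and> v < n \<and>
            \<not> (\<exists>k. real k < 1/288 * real n ^ 2 / 2 ^ \<phi> n \<and> explores_in A (f G v) n G v k)}"
        using w nk by blast
    qed
  qed
qed

end
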